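(* Let $E\in\mathbb N$ and let $0<\eta<\frac{2}{E}$. Let $A=\sum_{k,l=0}^{+\infty}A_{kl}\ket{k}\!\bra{l}$ be an operator on the single-mode Hilbert space $\mathcal H$, and let $\rho=\sum_{k,l=0}^{E}\rho_{kl}\ket{k}\!\bra{l}$ be a density operator with support bounded by $E$ in the Fock basis. Then $$\left|\mathrm{Tr}(A\rho)-\mathbb E_{\alpha\leftarrow Q_\rho}\big[f_A(\alpha,\eta)\big]\right|\le \eta K_A .$$
   Context: $\mathcal H$ is the single-mode (infinite-dimensional, separable) Hilbert space with Fock basis $\{\ket n\}_{n\in\mathbb N}$. For $\alpha\in\mathbb C$, $\ket\alpha$ denotes the coherent state. The Husimi function of a state $\rho$ is $Q_\rho(\alpha)=\frac{1}{\pi}\bra\alpha\rho\ket\alpha$, a probability density on $\mathbb C$; heterodyne detection of $\rho$ yields a sample $\alpha\in\mathbb C$ distributed according to $Q_\rho$, and $\mathbb E_{\alpha\leftarrow Q_\rho}[g(\alpha)]=\int_{\mathbb C} Q_\rho(\alpha)g(\alpha)\,d^2\alpha$. For $k,l\ge 0$ and $z\in\mathbb C$ define the polynomials $$\mathcal L_{k,l}(z)=e^{zz^*}\frac{(-1)^{k+l}}{\sqrt{k!}\sqrt{l!}}\frac{\partial^{k+l}}{\partial z^k\partial z^{*l}}e^{-zz^*}=\sum_{p=0}^{\min(k,l)}\frac{\sqrt{k!}\sqrt{l!}(-1)^p}{p!(k-p)!(l-p)!}z^{l-p}z^{*(k-p)}.$$ For an operator $A=\sum_{k,l}A_{kl}\ket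 k\!\bra l$, the fixed cutoff $E\in\mathbb N$, $z\in\mathbb C$ and $0<\eta<1$, define $$f_A(z,\eta)=\frac{1}{\eta}e^{(1-\frac1\eta)zz^*}\sum_{k,l=0}^{E}\frac{A_{kl}}{\sqrt{\eta^{k+l}}}\,\mathcal L_{k,l}\!\left(\frac{z}{\sqrt\eta}\right),\qquad K_A=\sum_{k,l=0}^{E}|A_{kl}|\sqrt{(k+1)(l+1)}.$$ *)

theory Defs
  imports "HOL-Analysis.Analysis"
begin

text \<open>Operators on the single-mode Hilbert space are represented by their
  matrices in the Fock basis: A k l = <k|A|l>.\<close>

definition coh :: "complex \<Rightarrow> nat \<Rightarrow> complex" where
  "coh \<alpha> n = complex_of_real (exp (- (cmod \<alpha>)\<^sup>2 / 2) / sqrt (fact n)) * \<alpha> ^ n"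

definition density_bounded :: "nat \<Rightarrow> (nat \<Rightarrow> nat \<Rightarrow> complex) \<Rightarrow> bool" where
  "density_bounded E \<rho> \<longleftrightarrow>
     (\<forall>k l. (E < k \<or> E < l) \<longrightarrow> \<rho> k l = 0) \<and>
     (\<forall>k l. \<rho> l k = cnj (\<rho> k l)) \<and>
     (\<forall>x :: nat \<Rightarrow> complex. Re (\<Sum>k\<le>E. \<Sum>l\<le>E. cnj (x k) * \<rho> k l * x l) \<ge> 0) \<and>
     (\<Sum>k\<le>E. \<rho> k k) = 1"

text \<open>Husimi function Q_rho(alpha) = (1/pi) <alpha|rho|alpha>, for rho supported in {0..E}
  (so the Fock expansion reduces to the finite sum over k,l \<le> E).\<close>
definition husimi :: "nat \<Rightarrow> (nat \<Rightarrow> nat \<Rightarrow> complex) \<Rightarrow> complex \<Rightarrow> complex" where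
  "husimi E \<rho> \<alpha> = (1 / complex_of_real pi) *
     (\<Sum>k\<le>E. \<Sum>l\<le>E. cnj (coh \<alpha> k) * \<rho> k l * coh \<alpha> l)"

definition tr_prod :: "nat \<Rightarrow> (nat \<Rightarrow> nat \<Rightarrow> complex) \<Rightarrow> (nat \<Rightarrow> nat \<Rightarrow> complex) \<Rightarrow> complex" where
  "tr_prod E A \<rho> = (\<Sum>k\<le>E. \<Sum>l\<le>E. A k l * \<rho> l k)"

definition LL :: "nat \<Rightarrow> nat \<Rightarrow> complex \<Rightarrow> complex" where
  "LL k l z = (\<Sum>p\<le>min k l.
     complex_of_real (sqrt (fact k) * sqrt (fact l) * (-1) ^ p / (fact p * fact (k - p) * fact (l - p)))
       * z ^ (l - p) * cnj z ^ (k - p))"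

definition fA :: "nat \<Rightarrow> (nat \<Rightarrow> nat \<Rightarrow> complex) \<Rightarrow> complex \<Rightarrow> real \<Rightarrow> complex" where
  "fA E A z \<eta> = complex_of_real (1 / \<eta> * exp ((1 - 1 / \<eta>) * (cmod z)\<^sup>2)) *
     (\<Sum>k\<le>E. \<Sum>l\<le>E. A k l / complex_of_real (sqrt (\<eta> ^ (k + l)))
        * LL k l (z / complex_of_real (sqrt \<eta>)))"

definition KA :: "nat \<Rightarrow> (nat \<Rightarrow> nat \<Rightarrow> complex) \<Rightarrow> real" where
  "KA E A = (\<Sum>k\<le>E. \<Sum>l\<le>E. cmod (A k l) * sqrt (real ((k + 1) * (l + 1))))"

end

theory Submission
  imports Defs "HOL-Probability.Probability" "HOL-Real_Asymp.Real_Asymp"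
begin


lemma measurable_Complex_pair[measurable]:
  "(\<lambda>(x,y). Complex x y) \<in> borel_measurable (lborel \<Otimes>\<^sub>M lborel)"
proof -
  have "(\<lambda>(x,y). Complex x y) = (\<lambda>p. complex_of_real (fst p) + \<i> * complex_of_real (snd p))"
    by (auto simp: fun_eq_iff complex_eq_iff)
  then show ?thesis by simp
qed

lemma lborel_complex:
  "distr (lborel \<Otimes>\<^sub>M lborel) borel (\<lambda>(x,y). Complex x y) = (lborel :: complex measure)"
proof (rule lborel_eqI[symmetric])
  fix l u :: complex assume le: "\<And>b. b \<in> Basis \<Longrightarrow> l \<bullet> b \<le> u \<bullet> b"
  have le1: "Re l \<le> Re u" and le2: "Im l \<le> Im u"
    using le[of 1] le[of "\<i>"] by (auto simp: Basis_complex_def)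
  have pre: "(\<lambda>(x,y). Complex x y) -` box l u \<inter> space (lborel \<Otimes>\<^sub>M lborel)
     = box (Re l) (Re u) \<times> box (Im l) (Im u)"
    by (auto simp: box_def Basis_complex_def space_pair_measure)
  have "emeasure (distr (lborel \<Otimes>\<^sub>M lborel) borel (\<lambda>(x,y). Complex x y)) (box l u)
     = emeasure (lborel \<Otimes>\<^sub>M lborel) (box (Re l) (Re u) \<times> box (Im l) (Im u))"
    by (subst emeasure_distr) (simp_all add: pre)
  also have "\<dots> = ennreal ((Re u - Re l) * (Im u - Im l))"
    using le1 le2 by (simp add: lborel.emeasure_pair_measure_Times ennreal_mult)
  also have "(Re u - Re l) * (Im u - Im l) = (\<Prod>b\<in>Basis. (u - l) \<bullet> b)"
    by (simp add: Basis_complex_def)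
  finally show "emeasure (distr (lborel \<Otimes>\<^sub>M lborel) borel (\<lambda>(x,y). Complex x y)) (box l u) = (\<Prod>b\<in>Basis. (u - l) \<bullet> b)" .
qed simp



lemma gauss1:
  assumes c: "0 < c"
  shows "has_bochner_integral lborel (\<lambda>t::real. exp (- c * t\<^sup>2)) (sqrt (pi / c))"
proof -
  define \<sigma> where "\<sigma> = 1 / sqrt (2 * c)"
  have s: "0 < \<sigma>" using c by (simp add: \<sigma>_def)
  have s2: "\<sigma>\<^sup>2 = 1 / (2 * c)" using c by (simp add: \<sigma>_def power_divide)
  have a: "2 * pi * \<sigma>\<^sup>2 = pi / c" using c by (simp add: s2)
  have b: "(t - 0)\<^sup>2 / (2 * \<sigma>\<^sup>2) = c * t\<^sup>2" for t using c by (simp add: s2)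
  have pc: "sqrt (pi / c) > 0" using c by simp
  have eq: "exp (- c * t\<^sup>2) = sqrt (pi / c) * normal_density 0 \<sigma> t" for t
    unfolding normal_density_def a using pc c by (simp add: s2)
  have "has_bochner_integral lborel (normal_density 0 \<sigma>) 1"
    using integrable_normal_density[OF s] integral_normal_density[OF s] by (simp add: has_bochner_integral_iff)
  from has_bochner_integral_mult_right[OF this, of "sqrt (pi / c)"]
  show ?thesis unfolding eq by simp
qed

lemma nn_gauss1:
  assumes c: "0 < c"
  shows "(\<integral>\<^sup>+t. ennreal (exp (- c * t\<^sup>2)) \<partial>lborel) = ennreal (sqrt (pi / c))"
proof -
  have i: "integrable lborel (\<lambda>t::real. exp (- c * t\<^sup>2))" and v: "integral\<^sup>L lborel (\<lambda>t::real. exp (- c * t\<^sup>2)) = sqrt (pi / c)"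
    using gauss1[OF c] by (simp_all add: has_bochner_integral_iff)
  show ?thesis using nn_integral_eq_integral[OF i] v by simp
qed

lemma nn_gaussC:
  assumes c: "0 < c"
  shows "(\<integral>\<^sup>+z. ennreal (exp (- c * (cmod z)\<^sup>2)) \<partial>(lborel::complex measure)) = ennreal (pi / c)"
proof -
  have pt: "(\<lambda>z. ennreal (exp (- c * (cmod z)\<^sup>2))) = (\<lambda>z. \<Prod>b\<in>Basis. ennreal (exp (- c * (z \<bullet> b)\<^sup>2)))"
  proof
    fix z :: complex
    have "exp (- c * (cmod z)\<^sup>2) = exp (- c * (Re z)\<^sup>2) * exp (- c * (Im z)\<^sup>2)"
      by (simp add: cmod_power2 ring_distribs exp_add[symmetric])
    then show "ennreal (exp (- c * (cmod z)\<^sup>2)) = (\<Prod>b\<in>Basis. ennreal (exp (- c * (z \<bullet> b)\<^sup>2)))"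
      by (simp add: Basis_complex_def ennreal_mult)
  qed
  have "(\<integral>\<^sup>+z. ennreal (exp (- c * (cmod z)\<^sup>2)) \<partial>(lborel::complex measure))
     = (\<Prod>b\<in>(Basis::complex set). (\<integral>\<^sup>+t. ennreal (exp (- c * t\<^sup>2)) \<partial>lborel))"
    unfolding pt by (rule nn_integral_lborel_prod[where f="\<lambda>b t. ennreal (exp (- c * t\<^sup>2))"]) auto
  also have "\<dots> = ennreal (sqrt (pi / c)) * ennreal (sqrt (pi / c))"
    unfolding nn_gauss1[OF c] by (simp add: Basis_complex_def)
  also have "\<dots> = ennreal (sqrt (pi / c) * sqrt (pi / c))"
    by (rule ennreal_mult[symmetric]) (use c in simp_all)
  also have "sqrt (pi / c) * sqrt (pi / c) = pi / c"
    using c by simp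
  finally show ?thesis .
qed

lemma gaussC:
  assumes c: "0 < c"
  shows "has_bochner_integral (lborel::complex measure) (\<lambda>z. exp (- c * (cmod z)\<^sup>2)) (pi / c)"
proof (rule has_bochner_integral_nn_integral)
  show "(\<lambda>z. exp (- c * (cmod z)\<^sup>2)) \<in> borel_measurable lborel" by measurable
  show "AE x in lborel. 0 \<le> exp (- c * (cmod x)\<^sup>2)" by simp
  show "0 \<le> pi / c" using c by simp
  show "(\<integral>\<^sup>+x. ennreal (exp (- c * (cmod x)\<^sup>2)) \<partial>lborel) = ennreal (pi / c)" by (rule nn_gaussC[OF c])
qed



definition G :: "real \<Rightarrow> nat \<Rightarrow> nat \<Rightarrow> complex \<Rightarrow> complex" where
  "G c a b z = complex_of_real (exp (- c * (cmod z)\<^sup>2)) * z ^ a * cnj z ^ b"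

lemma pow_le_exp: 
  assumes "0 \<le> s"
  shows "s ^ n \<le> real n ^ n * exp s"
proof (cases "n = 0")
  case True then show ?thesis using assms by simp
next
  case False
  have "s / n \<le> exp (s / n)" using exp_ge_add_one_self[of "s/n"] by linarith
  then have "(s / n) ^ n \<le> exp (s / n) ^ n" using assms by (intro power_mono) auto
  also have "exp (s / n) ^ n = exp s" using False by (simp add: exp_of_nat_mult[symmetric])
  finally have "s ^ n / real n ^ n \<le> exp s" by (simp add: power_divide)
  then show ?thesis using False by (simp add: field_simps)
qed

lemma pow_exp_bound:
  fixes c :: real
  assumes c: "0 < c"
  shows "\<exists>K. \<forall>t\<ge>0. t ^ n * exp (- c * t\<^sup>2) \<le> K * exp (- (c/2) * t\<^sup>2)"
proof -
  define K where "K = 1 + (2 / c) ^ n * real n ^ n"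
  have "t ^ n * exp (- c * t\<^sup>2) \<le> K * exp (- (c/2) * t\<^sup>2)" if t: "t \<ge> 0" for t
  proof -
    have e1: "1 \<le> exp ((c/2) * t\<^sup>2)" using c t by simp
    have tn: "t ^ n \<le> 1 + (t\<^sup>2) ^ n"
    proof (cases "t \<le> 1")
      case True then have "t ^ n \<le> 1" using t by (simp add: power_le_one)
      moreover have "0 \<le> (t\<^sup>2) ^ n" by simp
      ultimately show ?thesis by linarith
    next
      case False then have "t ^ n \<le> (t\<^sup>2) ^ n"
        by (simp add: power_mult[symmetric] power_increasing)
      then show ?thesis by simp
    qed
    have "(t\<^sup>2) ^ n = (2 / c) ^ n * ((c/2) * t\<^sup>2) ^ n"
      using c by (simp add: power_mult_distrib[symmetric])
    also have "\<dots> \<le> (2 / c) ^ n * (real n ^ n * exp ((c/2) * t\<^sup>2))"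
      using c t by (intro mult_left_mono pow_le_exp) auto
    finally have "t ^ n \<le> 1 + (2 / c) ^ n * real n ^ n * exp ((c/2) * t\<^sup>2)"
      using tn by simp
    also have "\<dots> \<le> K * exp ((c/2) * t\<^sup>2)"
      using e1 c by (simp add: K_def algebra_simps)
    finally have "t ^ n \<le> K * exp ((c/2) * t\<^sup>2)" .
    then have "t ^ n * exp (- c * t\<^sup>2) \<le> K * exp ((c/2) * t\<^sup>2) * exp (- c * t\<^sup>2)"
      by (intro mult_right_mono) auto
    also have "\<dots> = K * exp (- (c/2) * t\<^sup>2)"
      by (simp add: mult.assoc exp_add[symmetric] algebra_simps)
    finally show ?thesis .
  qed
  then show ?thesis by blast
qed

lemma cnj_measurable[measurable]: "cnj \<in> borel_measurable borel"
  by (intro borel_measurable_continuous_onI continuous_intros)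

lemma G_measurable[measurable]: "G c a b \<in> borel_measurable borel"
  unfolding G_def by measurable

lemma norm_G: "norm (G c a b z) = exp (- c * (cmod z)\<^sup>2) * cmod z ^ (a + b)"
  by (simp add: G_def norm_mult norm_power power_add)

lemma integrable_G:
  assumes c: "0 < c"
  shows "integrable lborel (G c a b)"
proof -
  obtain K where K: "\<And>t. t \<ge> 0 \<Longrightarrow> t ^ (a+b) * exp (- c * t\<^sup>2) \<le> K * exp (- (c/2) * t\<^sup>2)"
    using pow_exp_bound[OF c, of "a+b"] by blast
  have "integrable lborel (\<lambda>z::complex. exp (- (c/2) * (cmod z)\<^sup>2))"
    using gaussC[of "c/2"] c by (simp add: has_bochner_integral_iff)
  then have i: "integrable lborel (\<lambda>z::complex. K * exp (- (c/2) * (cmod z)\<^sup>2))" by simp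
  show ?thesis
  proof (rule Bochner_Integration.integrable_bound[OF i])
    show "G c a b \<in> borel_measurable lborel" by measurable
    show "AE x in lborel. norm (G c a b x) \<le> norm (K * exp (- (c / 2) * (cmod x)\<^sup>2))"
    proof (rule AE_I2)
      fix x :: complex
      have "norm (G c a b x) \<le> K * exp (- (c / 2) * (cmod x)\<^sup>2)"
        unfolding norm_G using K[of "cmod x"] by (simp add: mult.commute)
      also have "\<dots> \<le> norm (K * exp (- (c / 2) * (cmod x)\<^sup>2))" by simp
      finally show "norm (G c a b x) \<le> norm (K * exp (- (c / 2) * (cmod x)\<^sup>2))" .
    qed
  qed
qed



lemma ftc_line:
  fixes F f :: "real \<Rightarrow> complex"
  assumes d: "\<And>x. (F has_vector_derivative f x) (at x)"
    and ct: "\<And>x. isCont f x"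
    and i: "integrable lborel f"
    and t: "(F \<longlongrightarrow> 0) at_top" and b: "(F \<longlongrightarrow> 0) at_bot"
  shows "integral\<^sup>L lborel f = 0"
proof -
  have "(LBINT x=-\<infinity>..\<infinity>. f x) = 0 - 0"
  proof (rule interval_integral_FTC_integrable)
    show "- \<infinity> < (\<infinity>::ereal)" by simp
    show "set_integrable lborel (einterval (- \<infinity>) \<infinity>) f"
      using i by (simp add: set_integrable_def)
    show "((F \<circ> real_of_ereal) \<longlongrightarrow> 0) (at_right (- \<infinity>))"
      using b by (simp add: ereal_tendsto_simps)
    show "((F \<circ> real_of_ereal) \<longlongrightarrow> 0) (at_left \<infinity>)"
      using t by (simp add: ereal_tendsto_simps)
  qed (use d ct in auto)
  then show ?thesis
    by (simp add: interval_lebesgue_integral_def set_lebesgue_integral_def)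
qed

lemma measurable_Complex_pair'[measurable]:
  "(\<lambda>(x,y). Complex x y) \<in> lborel \<Otimes>\<^sub>M lborel \<rightarrow>\<^sub>M borel"
  using measurable_Complex_pair by simp

lemma complex_to_pair:
  fixes D :: "complex \<Rightarrow> complex"
  assumes D[measurable]: "D \<in> borel_measurable borel" and i: "integrable lborel D"
  shows "integral\<^sup>L lborel D = integral\<^sup>L (lborel \<Otimes>\<^sub>M lborel) (\<lambda>(x,y). D (Complex x y))"
    and "integrable (lborel \<Otimes>\<^sub>M lborel) (\<lambda>(x,y). D (Complex x y))"
proof -
  have "integral\<^sup>L lborel D = integral\<^sup>L (distr (lborel \<Otimes>\<^sub>M lborel) borel (\<lambda>(x,y). Complex x y)) D"
    by (simp add: lborel_complex)
  also have "\<dots> = integral\<^sup>L (lborel \<Otimes>\<^sub>M lborel) (\<lambda>p. D ((\<lambda>(x,y). Complex x y) p))"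
    by (rule integral_distr) measurable
  finally show "integral\<^sup>L lborel D = integral\<^sup>L (lborel \<Otimes>\<^sub>M lborel) (\<lambda>(x,y). D (Complex x y))"
    by (simp add: case_prod_beta')
  have "integrable (distr (lborel \<Otimes>\<^sub>M lborel) borel (\<lambda>(x,y). Complex x y)) D"
    using i by (simp add: lborel_complex)
  then have "integrable (lborel \<Otimes>\<^sub>M lborel) (\<lambda>p. D ((\<lambda>(x,y). Complex x y) p))"
    by (subst (asm) integrable_distr_eq) measurable
  then show "integrable (lborel \<Otimes>\<^sub>M lborel) (\<lambda>(x,y). D (Complex x y))"
    by (simp add: case_prod_beta')
qed

lemma fubini_x_zero:
  fixes D :: "complex \<Rightarrow> complex"
  assumes D[measurable]: "D \<in> borel_measurable borel" and i: "integrable lborel D"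
    and z: "\<And>y. integrable lborel (\<lambda>x. D (Complex x y)) \<Longrightarrow> integral\<^sup>L lborel (\<lambda>x. D (Complex x y)) = 0"
  shows "integral\<^sup>L lborel D = 0"
proof -
  note ip = complex_to_pair[OF D i]
  have ip2: "integrable (lborel \<Otimes>\<^sub>M lborel) (case_prod (\<lambda>x y. D (Complex x y)))"
    using ip(2) by simp
  have "integral\<^sup>L lborel D = (\<integral>y. (\<integral>x. D (Complex x y) \<partial>lborel) \<partial>lborel)"
    using ip(1) lborel_pair.integral_snd[OF ip2] by simp
  also have "\<dots> = 0"
  proof (rule integral_eq_zero_AE)
    show "AE y in lborel. (\<integral>x. D (Complex x y) \<partial>lborel) = 0"
      using lborel_pair.AE_integrable_snd[OF ip2] by eventually_elim (rule z)
  qed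
  finally show ?thesis .
qed

lemma fubini_y_zero:
  fixes D :: "complex \<Rightarrow> complex"
  assumes D[measurable]: "D \<in> borel_measurable borel" and i: "integrable lborel D"
    and z: "\<And>x. integrable lborel (\<lambda>y. D (Complex x y)) \<Longrightarrow> integral\<^sup>L lborel (\<lambda>y. D (Complex x y)) = 0"
  shows "integral\<^sup>L lborel D = 0"
proof -
  note ip = complex_to_pair[OF D i]
  have ip2: "integrable (lborel \<Otimes>\<^sub>M lborel) (case_prod (\<lambda>x y. D (Complex x y)))"
    using ip(2) by simp
  have "integral\<^sup>L lborel D = (\<integral>x. (\<integral>y. D (Complex x y) \<partial>lborel) \<partial>lborel)"
    using ip(1) lborel_pair.integral_fst[OF ip2] by simp
  also have "\<dots> = 0"
  proof (rule integral_eq_zero_AE)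
    show "AE x in lborel. (\<integral>y. D (Complex x y) \<partial>lborel) = 0"
      using lborel_pair.AE_integrable_fst[OF ip2] by eventually_elim (rule z)
  qed
  finally show ?thesis .
qed



definition Dx :: "real \<Rightarrow> nat \<Rightarrow> nat \<Rightarrow> complex \<Rightarrow> complex" where
  "Dx c a b z = - of_real c * G c (a+1) b z - of_real c * G c a (b+1) z
     + of_nat a * G c (a-1) b z + of_nat b * G c a (b-1) z"

definition Dy :: "real \<Rightarrow> nat \<Rightarrow> nat \<Rightarrow> complex \<Rightarrow> complex" where
  "Dy c a b z = \<i> * of_real c * G c (a+1) b z - \<i> * of_real c * G c a (b+1) z
     + \<i> * of_nat a * G c (a-1) b z - \<i> * of_nat b * G c a (b-1) z"

lemma G_Complex:
  "G c a b (Complex x y) = exp (- of_real c * ((of_real x)\<^sup>2 + (of_real y)\<^sup>2))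
      * (of_real x + \<i> * of_real y) ^ a * (of_real x - \<i> * of_real y) ^ b"
proof -
  have "cnj (Complex x y) = of_real x - \<i> * of_real y" by (simp add: complex_eq_iff)
  moreover have "Complex x y = of_real x + \<i> * of_real y" by (simp add: Complex_eq)
  moreover have "complex_of_real (exp (- c * (cmod (Complex x y))\<^sup>2)) = exp (- of_real c * ((of_real x)\<^sup>2 + (of_real y)\<^sup>2))"
    by (simp add: cmod_power2 exp_of_real[symmetric])
  ultimately show ?thesis unfolding G_def by simp
qed

lemma alg_x:
  fixes u v E X C :: complex
  assumes "u + v = 2 * X"
  shows "E * (- 2 * C * X) * u ^ a * v ^ b + E * (of_nat a * u ^ (a - 1)) * v ^ b + E * u ^ a * (of_nat b * v ^ (b - 1))
    = - C * (E * u ^ (a + 1) * v ^ b) - C * (E * u ^ a * v ^ (b + 1)) + of_nat a * (E * u ^ (a - 1) * v ^ b) + of_nat b * (E * u ^ a * v ^ (b - 1))"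
proof -
  have "- C * (E * u ^ (a + 1) * v ^ b) - C * (E * u ^ a * v ^ (b + 1)) = - C * E * u ^ a * v ^ b * (u + v)"
    by (simp add: algebra_simps)
  also have "\<dots> = E * (- 2 * C * X) * u ^ a * v ^ b" using assms by simp
  finally show ?thesis by (simp add: algebra_simps)
qed

lemma Dx_deriv:
  "((\<lambda>x. G c a b (Complex x y)) has_vector_derivative Dx c a b (Complex x y)) (at x)"
proof -
  define g where "g = (\<lambda>w. exp (- of_real c * (w\<^sup>2 + (of_real y)\<^sup>2))
      * (w + \<i> * of_real y) ^ a * (w - \<i> * of_real y) ^ b)"
  define E where "E = exp (- of_real c * ((of_real x)\<^sup>2 + (of_real y :: complex)\<^sup>2))"
  define u where "u = (of_real x + \<i> * of_real y :: complex)"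
  define v where "v = (of_real x - \<i> * of_real y :: complex)"
  have e: "(\<lambda>x. G c a b (Complex x y)) = (\<lambda>x. g (of_real x))"
    by (simp add: G_Complex g_def)
  have "(g has_field_derivative (E * (- 2 * of_real c * of_real x) * u ^ a * v ^ b
      + E * (of_nat a * u ^ (a - 1)) * v ^ b + E * u ^ a * (of_nat b * v ^ (b - 1)))) (at (of_real x))"
    unfolding g_def
    apply (rule derivative_eq_intros refl)+
    apply (simp add: E_def u_def v_def algebra_simps)
    done
  also have "(E * (- 2 * of_real c * of_real x) * u ^ a * v ^ b
      + E * (of_nat a * u ^ (a - 1)) * v ^ b + E * u ^ a * (of_nat b * v ^ (b - 1))) = Dx c a b (Complex x y)"
    unfolding Dx_def G_Complex E_def[symmetric] u_def[symmetric] v_def[symmetric]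
    by (rule alg_x) (simp add: u_def v_def)
  finally show ?thesis unfolding e by (rule has_vector_derivative_real_field)
qed

lemma alg_y:
  fixes u v E Y C :: complex
  assumes "u - v = 2 * \<i> * Y"
  shows "E * (- 2 * C * Y) * u ^ a * v ^ b + E * (of_nat a * u ^ (a - 1) * \<i>) * v ^ b + E * u ^ a * (of_nat b * v ^ (b - 1) * - \<i>)
    = \<i> * C * (E * u ^ (a + 1) * v ^ b) - \<i> * C * (E * u ^ a * v ^ (b + 1)) + \<i> * of_nat a * (E * u ^ (a - 1) * v ^ b) - \<i> * of_nat b * (E * u ^ a * v ^ (b - 1))"
proof -
  have "\<i> * C * (E * u ^ (a + 1) * v ^ b) - \<i> * C * (E * u ^ a * v ^ (b + 1)) = \<i> * C * E * u ^ a * v ^ b * (u - v)"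
    by (simp add: algebra_simps)
  also have "\<dots> = E * (- 2 * C * Y) * u ^ a * v ^ b" using assms by (simp add: algebra_simps)
  finally show ?thesis by (simp add: algebra_simps)
qed

lemma Dy_deriv:
  "((\<lambda>y. G c a b (Complex x y)) has_vector_derivative Dy c a b (Complex x y)) (at y)"
proof -
  define g where "g = (\<lambda>w. exp (- of_real c * ((of_real x)\<^sup>2 + w\<^sup>2))
      * (of_real x + \<i> * w) ^ a * (of_real x - \<i> * w) ^ b)"
  define E where "E = exp (- of_real c * ((of_real x)\<^sup>2 + (of_real y :: complex)\<^sup>2))"
  define u where "u = (of_real x + \<i> * of_real y :: complex)"
  define v where "v = (of_real x - \<i> * of_real y :: complex)"
  have e: "(\<lambda>y. G c a b (Complex x y)) = (\<lambda>y. g (of_real y))"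
    by (simp add: G_Complex g_def)
  have "(g has_field_derivative (E * (- 2 * of_real c * of_real y) * u ^ a * v ^ b
      + E * (of_nat a * u ^ (a - 1) * \<i>) * v ^ b + E * u ^ a * (of_nat b * v ^ (b - 1) * - \<i>))) (at (of_real y))"
    unfolding g_def
    apply (rule derivative_eq_intros refl)+
    apply (simp add: E_def u_def v_def algebra_simps)
    done
  also have "(E * (- 2 * of_real c * of_real y) * u ^ a * v ^ b
      + E * (of_nat a * u ^ (a - 1) * \<i>) * v ^ b + E * u ^ a * (of_nat b * v ^ (b - 1) * - \<i>)) = Dy c a b (Complex x y)"
    unfolding Dy_def G_Complex E_def[symmetric] u_def[symmetric] v_def[symmetric]
    by (rule alg_y) (simp add: u_def v_def)
  finally show ?thesis unfolding e by (rule has_vector_derivative_real_field)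
qed



lemma G_bound:
  assumes c: "0 < c"
  shows "\<exists>K\<ge>0. \<forall>z. norm (G c a b z) \<le> K * exp (- (c/2) * (cmod z)\<^sup>2)"
proof -
  obtain K where K: "\<And>t. t \<ge> 0 \<Longrightarrow> t ^ (a+b) * exp (- c * t\<^sup>2) \<le> K * exp (- (c/2) * t\<^sup>2)"
    using pow_exp_bound[OF c, of "a+b"] by blast
  have b: "norm (G c a b z) \<le> K * exp (- (c/2) * (cmod z)\<^sup>2)" for z
    unfolding norm_G using K[of "cmod z"] by (simp add: mult.commute)
  have "0 \<le> K" using b[of 0] by (metis norm_ge_zero order_trans exp_zero mult_1_right mult_zero_right norm_zero power_zero_numeral neg_0_equal_iff_equal mult_zero_left)
  with b show ?thesis by blast
qed

lemma G_lim_x: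
  assumes c: "0 < c"
  shows "((\<lambda>x. G c a b (Complex x y)) \<longlongrightarrow> 0) at_top" "((\<lambda>x. G c a b (Complex x y)) \<longlongrightarrow> 0) at_bot"
proof -
  obtain K where K0: "K \<ge> 0" and K: "\<And>z. norm (G c a b z) \<le> K * exp (- (c/2) * (cmod z)\<^sup>2)"
    using G_bound[OF c] by blast
  have le: "norm (G c a b (Complex x y)) \<le> K * exp (- (c/2) * x\<^sup>2)" for x
  proof -
    have "exp (- (c/2) * (cmod (Complex x y))\<^sup>2) \<le> exp (- (c/2) * x\<^sup>2)"
      using c by (simp add: cmod_power2)
    then show ?thesis using K[of "Complex x y"] K0 by (meson mult_left_mono order_trans)
  qed
  have l1: "((\<lambda>x. exp (- (c/2) * x\<^sup>2)) \<longlongrightarrow> 0) at_top" using c by real_asymp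
  have l2: "((\<lambda>x. exp (- (c/2) * x\<^sup>2)) \<longlongrightarrow> 0) at_bot" using c by real_asymp
  show "((\<lambda>x. G c a b (Complex x y)) \<longlongrightarrow> 0) at_top"
    by (rule Lim_null_comparison[OF always_eventually[OF allI[OF le]]]) (use tendsto_mult_right_zero[OF l1] in simp)
  show "((\<lambda>x. G c a b (Complex x y)) \<longlongrightarrow> 0) at_bot"
    by (rule Lim_null_comparison[OF always_eventually[OF allI[OF le]]]) (use tendsto_mult_right_zero[OF l2] in simp)
qed

lemma G_lim_y:
  assumes c: "0 < c"
  shows "((\<lambda>y. G c a b (Complex x y)) \<longlongrightarrow> 0) at_top" "((\<lambda>y. G c a b (Complex x y)) \<longlongrightarrow> 0) at_bot"
proof -
  obtain K where K0: "K \<ge> 0" and K: "\<And>z. norm (G c a b z) \<le> K * exp (- (c/2) * (cmod z)\<^sup>2)"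
    using G_bound[OF c] by blast
  have le: "norm (G c a b (Complex x y)) \<le> K * exp (- (c/2) * y\<^sup>2)" for y
  proof -
    have "exp (- (c/2) * (cmod (Complex x y))\<^sup>2) \<le> exp (- (c/2) * y\<^sup>2)"
      using c by (simp add: cmod_power2)
    then show ?thesis using K[of "Complex x y"] K0 by (meson mult_left_mono order_trans)
  qed
  have l1: "((\<lambda>x. exp (- (c/2) * x\<^sup>2)) \<longlongrightarrow> 0) at_top" using c by real_asymp
  have l2: "((\<lambda>x. exp (- (c/2) * x\<^sup>2)) \<longlongrightarrow> 0) at_bot" using c by real_asymp
  show "((\<lambda>y. G c a b (Complex x y)) \<longlongrightarrow> 0) at_top"
    by (rule Lim_null_comparison[OF always_eventually[OF allI[OF le]]]) (use tendsto_mult_right_zero[OF l1] in simp)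
  show "((\<lambda>y. G c a b (Complex x y)) \<longlongrightarrow> 0) at_bot"
    by (rule Lim_null_comparison[OF always_eventually[OF allI[OF le]]]) (use tendsto_mult_right_zero[OF l2] in simp)
qed

lemma isCont_Gx: "isCont (\<lambda>x. G c a b (Complex x y)) x"
  using Dx_deriv has_vector_derivative_continuous by blast

lemma isCont_Gy: "isCont (\<lambda>y. G c a b (Complex x y)) y"
  using Dy_deriv has_vector_derivative_continuous by blast

lemma Dx_measurable[measurable]: "Dx c a b \<in> borel_measurable borel"
  unfolding Dx_def by measurable

lemma Dy_measurable[measurable]: "Dy c a b \<in> borel_measurable borel"
  unfolding Dy_def by measurable

lemma integrable_Dx: assumes c: "0 < c" shows "integrable lborel (Dx c a b)"
  unfolding Dx_def by (intro Bochner_Integration.integrable_diff Bochner_Integration.integrable_add Bochner_Integration.integrable_mult_right integrable_G[OF c])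

lemma integrable_Dy: assumes c: "0 < c" shows "integrable lborel (Dy c a b)"
  unfolding Dy_def by (intro Bochner_Integration.integrable_diff Bochner_Integration.integrable_add Bochner_Integration.integrable_mult_right integrable_G[OF c])

lemma int_Dx_zero:
  assumes c: "0 < c"
  shows "integral\<^sup>L lborel (Dx c a b) = 0"
proof (rule fubini_x_zero)
  fix y assume i: "integrable lborel (\<lambda>x. Dx c a b (Complex x y))"
  show "integral\<^sup>L lborel (\<lambda>x. Dx c a b (Complex x y)) = 0"
  proof (rule ftc_line[OF Dx_deriv _ i G_lim_x[OF c]])
    fix x show "isCont (\<lambda>x. Dx c a b (Complex x y)) x"
      unfolding Dx_def by (intro continuous_intros isCont_Gx)
  qed
qed (use c integrable_Dx in auto)

lemma int_Dy_zero:
  assumes c: "0 < c"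
  shows "integral\<^sup>L lborel (Dy c a b) = 0"
proof (rule fubini_y_zero)
  fix x assume i: "integrable lborel (\<lambda>y. Dy c a b (Complex x y))"
  show "integral\<^sup>L lborel (\<lambda>y. Dy c a b (Complex x y)) = 0"
  proof (rule ftc_line[OF Dy_deriv _ i G_lim_y[OF c]])
    fix y show "isCont (\<lambda>y. Dy c a b (Complex x y)) y"
      unfolding Dy_def by (intro continuous_intros isCont_Gy)
  qed
qed (use c integrable_Dy in auto)



definition IG :: "real \<Rightarrow> nat \<Rightarrow> nat \<Rightarrow> complex" where
  "IG c a b = integral\<^sup>L lborel (G c a b)"

lemma lin4:
  fixes f1 f2 f3 f4 :: "'a \<Rightarrow> complex"
  assumes "integrable M f1" "integrable M f2" "integrable M f3" "integrable M f4"
  shows "integral\<^sup>L M (\<lambda>z. k1 * f1 z - k2 * f2 z + k3 * f3 z + k4 * f4 z)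
     = k1 * integral\<^sup>L M f1 - k2 * integral\<^sup>L M f2 + k3 * integral\<^sup>L M f3 + k4 * integral\<^sup>L M f4"
    and "integral\<^sup>L M (\<lambda>z. k1 * f1 z - k2 * f2 z + k3 * f3 z - k4 * f4 z)
     = k1 * integral\<^sup>L M f1 - k2 * integral\<^sup>L M f2 + k3 * integral\<^sup>L M f3 - k4 * integral\<^sup>L M f4"
proof -
  have i1: "integrable M (\<lambda>z. k1 * f1 z)" "integrable M (\<lambda>z. k2 * f2 z)"
    "integrable M (\<lambda>z. k3 * f3 z)" "integrable M (\<lambda>z. k4 * f4 z)"
    using assms by auto
  have i2: "integrable M (\<lambda>z. k1 * f1 z - k2 * f2 z)" using i1 by auto
  have i3: "integrable M (\<lambda>z. k1 * f1 z - k2 * f2 z + k3 * f3 z)" using i1 i2 by auto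
  have e2: "integral\<^sup>L M (\<lambda>z. k1 * f1 z - k2 * f2 z) = k1 * integral\<^sup>L M f1 - k2 * integral\<^sup>L M f2"
    using i1 by (simp add: Bochner_Integration.integral_diff)
  have e3: "integral\<^sup>L M (\<lambda>z. k1 * f1 z - k2 * f2 z + k3 * f3 z) = k1 * integral\<^sup>L M f1 - k2 * integral\<^sup>L M f2 + k3 * integral\<^sup>L M f3"
    using i1 i2 e2 by (simp add: Bochner_Integration.integral_add)
  show "integral\<^sup>L M (\<lambda>z. k1 * f1 z - k2 * f2 z + k3 * f3 z + k4 * f4 z)
     = k1 * integral\<^sup>L M f1 - k2 * integral\<^sup>L M f2 + k3 * integral\<^sup>L M f3 + k4 * integral\<^sup>L M f4"
    using i1 i3 e3 by (simp add: Bochner_Integration.integral_add)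
  show "integral\<^sup>L M (\<lambda>z. k1 * f1 z - k2 * f2 z + k3 * f3 z - k4 * f4 z)
     = k1 * integral\<^sup>L M f1 - k2 * integral\<^sup>L M f2 + k3 * integral\<^sup>L M f3 - k4 * integral\<^sup>L M f4"
    using i1 i3 e3 by (simp add: Bochner_Integration.integral_diff)
qed

lemma IG_rec:
  assumes c: "0 < c"
  shows "of_real c * IG c (a+1) b = of_nat b * IG c a (b-1)"
proof -
  note iG = integrable_G[OF c]
  have x: "- of_real c * IG c (a+1) b - of_real c * IG c a (b+1) + of_nat a * IG c (a-1) b + of_nat b * IG c a (b-1) = 0"
    using int_Dx_zero[OF c, of a b] unfolding Dx_def IG_def lin4(1)[OF iG iG iG iG] .
  have y: "\<i> * of_real c * IG c (a+1) b - \<i> * of_real c * IG c a (b+1) + \<i> * of_nat a * IG c (a-1) b - \<i> * of_nat b * IG c a (b-1) = 0"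
    using int_Dy_zero[OF c, of a b] unfolding Dy_def IG_def lin4(2)[OF iG iG iG iG] .
  have y': "of_real c * IG c (a+1) b - of_real c * IG c a (b+1) + of_nat a * IG c (a-1) b - of_nat b * IG c a (b-1) = 0"
  proof -
    have "\<i> * (of_real c * IG c (a+1) b - of_real c * IG c a (b+1) + of_nat a * IG c (a-1) b - of_nat b * IG c a (b-1)) = 0"
      using y by (simp add: algebra_simps)
    then show ?thesis by simp
  qed
  define P where "P = of_real c * IG c (a+1) b"
  define Q where "Q = of_real c * IG c a (b+1)"
  define R where "R = of_nat a * IG c (a-1) b"
  define S where "S = of_nat b * IG c a (b-1)"
  have x2: "- P - Q + R + S = 0" using x unfolding P_def Q_def R_def S_def by simp
  have y2: "P - Q + R - S = 0" using y' unfolding P_def Q_def R_def S_def by simp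
  have "(P - Q + R - S) - (- P - Q + R + S) = 0" using x2 y2 by simp
  then have "2 * (P - S) = 0" by (simp add: algebra_simps)
  then show ?thesis unfolding P_def S_def by simp
qed

lemma IG_00:
  assumes c: "0 < c"
  shows "IG c 0 0 = of_real (pi / c)"
proof -
  have "integral\<^sup>L lborel (\<lambda>z::complex. exp (- c * (cmod z)\<^sup>2)) = pi / c"
    using gaussC[OF c] by (simp add: has_bochner_integral_iff)
  then show ?thesis unfolding IG_def G_def by simp
qed

lemma IG_a0:
  assumes c: "0 < c"
  shows "IG c (a+1) 0 = 0"
  using IG_rec[OF c, of a 0] c by simp

lemma IG_0b:
  assumes c: "0 < c"
  shows "IG c 0 (b+1) = 0"
proof -
  have "G c 0 (b+1) = (\<lambda>z. cnj (G c (b+1) 0 z))"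
    by (simp add: G_def fun_eq_iff)
  then have "IG c 0 (b+1) = cnj (IG c (b+1) 0)"
    unfolding IG_def by simp
  then show ?thesis using IG_a0[OF c] by simp
qed

lemma IG_closed:
  assumes c: "0 < c"
  shows "IG c a b = (if a = b then of_real (pi * fact a / c ^ (a+1)) else 0)"
proof (induction a arbitrary: b)
  case 0
  then show ?case
  proof (cases b)
    case 0 then show ?thesis using IG_00[OF c] by simp
  next
    case (Suc b') then show ?thesis using IG_0b[OF c, of b'] by simp
  qed
next
  case (Suc a)
  show ?case
  proof (cases b)
    case 0 then show ?thesis using IG_a0[OF c, of a] by simp
  next
    case (Suc b')
    have r: "of_real c * IG c (a+1) (b'+1) = of_nat (b'+1) * IG c a b'"
      using IG_rec[OF c, of a "b'+1"] by simp
    have "IG c (a+1) (b'+1) = of_nat (b'+1) / of_real c * IG c a b'"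
      using r c by (simp add: field_simps)
    also have "\<dots> = (if a = b' then of_real (pi * fact (a+1) / c ^ (a+2)) else 0)"
      using c by (simp add: Suc.IH field_simps)
    finally show ?thesis using Suc by simp
  qed
qed



lemma alt_choose:
  "k \<le> N \<Longrightarrow> (\<Sum>p\<le>k. (-1::int) ^ p * int (k choose p) * int ((N - p) choose m))
     = (if k \<le> m then int ((N - k) choose (m - k)) else 0)"
proof (induction k arbitrary: N)
  case 0 then show ?case by simp
next
  case (Suc k)
  have s1: "(\<Sum>p\<le>Suc k. (-1::int) ^ p * int (Suc k choose p) * int ((N - p) choose m))
      = (\<Sum>p\<le>Suc k. (-1::int) ^ p * int (k choose p) * int ((N - p) choose m))
      + (\<Sum>p\<le>k. (-1::int) ^ Suc p * int (k choose p) * int ((N - Suc p) choose m))"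
  proof -
    have "(\<Sum>p\<le>Suc k. (-1::int) ^ p * int (Suc k choose p) * int ((N - p) choose m))
        = (-1::int) ^ 0 * int (Suc k choose 0) * int ((N - 0) choose m)
          + (\<Sum>p\<le>k. (-1::int) ^ Suc p * int (Suc k choose Suc p) * int ((N - Suc p) choose m))"
      by (subst sum.atMost_Suc_shift) simp
    also have "\<dots> = (-1::int) ^ 0 * int (k choose 0) * int ((N - 0) choose m)
          + (\<Sum>p\<le>k. (-1::int) ^ Suc p * int (k choose Suc p) * int ((N - Suc p) choose m))
          + (\<Sum>p\<le>k. (-1::int) ^ Suc p * int (k choose p) * int ((N - Suc p) choose m))"
    proof -
      have pw: "(-1::int) ^ Suc p * int (Suc k choose Suc p) * int ((N - Suc p) choose m)
         = (-1::int) ^ Suc p * int (k choose Suc p) * int ((N - Suc p) choose m)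
           + (-1::int) ^ Suc p * int (k choose p) * int ((N - Suc p) choose m)" for p
        by (simp add: algebra_simps)
      show ?thesis unfolding pw sum.distrib by simp
    qed
    also have "(-1::int) ^ 0 * int (k choose 0) * int ((N - 0) choose m)
          + (\<Sum>p\<le>k. (-1::int) ^ Suc p * int (k choose Suc p) * int ((N - Suc p) choose m))
        = (\<Sum>p\<le>Suc k. (-1::int) ^ p * int (k choose p) * int ((N - p) choose m))"
      by (rule sym, subst sum.atMost_Suc_shift) simp
    finally show ?thesis .
  qed
  have s2: "(\<Sum>p\<le>Suc k. (-1::int) ^ p * int (k choose p) * int ((N - p) choose m))
      = (\<Sum>p\<le>k. (-1::int) ^ p * int (k choose p) * int ((N - p) choose m))"
    by simp
  have s3: "(\<Sum>p\<le>k. (-1::int) ^ Suc p * int (k choose p) * int ((N - Suc p) choose m))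
      = - (\<Sum>p\<le>k. (-1::int) ^ p * int (k choose p) * int ((N - 1 - p) choose m))"
    by (simp add: sum_negf[symmetric])
  have N: "k \<le> N" "k \<le> N - 1" using Suc.prems by auto
  have "(\<Sum>p\<le>Suc k. (-1::int) ^ p * int (Suc k choose p) * int ((N - p) choose m))
     = (if k \<le> m then int ((N - k) choose (m - k)) else 0) - (if k \<le> m then int ((N - 1 - k) choose (m - k)) else 0)"
    unfolding s1 s2 s3 Suc.IH[OF N(1)] Suc.IH[OF N(2)] by simp
  also have "\<dots> = (if Suc k \<le> m then int ((N - Suc k) choose (m - Suc k)) else 0)"
  proof (cases "Suc k \<le> m")
    case True
    obtain a where a: "N - k = Suc a" using Suc.prems by (metis Suc_diff_le diff_Suc_Suc)
    obtain b where b: "m - k = Suc b" using True by (metis Suc_diff_le diff_Suc_Suc)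
    have "N - 1 - k = a" "N - Suc k = a" "m - Suc k = b" using a b by auto
    then show ?thesis using True a b by simp
  next
    case False
    then show ?thesis by (cases "k = m") auto
  qed
  finally show ?case .
qed

lemma alt_choose_real:
  assumes "k \<le> N"
  shows "(\<Sum>p\<le>k. (-1::real) ^ p * real (k choose p) * real ((N - p) choose m))
     = (if k \<le> m then real ((N - k) choose (m - k)) else 0)"
proof -
  have "real_of_int (\<Sum>p\<le>k. (-1::int) ^ p * int (k choose p) * int ((N - p) choose m))
     = real_of_int (if k \<le> m then int ((N - k) choose (m - k)) else 0)"
    using alt_choose[OF assms] by simp
  then show ?thesis by simp
qed

lemma comb_real:
  assumes kn: "k \<le> n" and ln: "l \<le> n"
  shows "(\<Sum>p\<le>min k l. (-1) ^ p * fact (n - p) / (fact p * fact (k - p) * fact (l - p)) :: real)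
     = (if k + l \<le> n then fact (n - k) * fact (n - l) / (fact k * fact l * fact (n - k - l)) else 0)"
proof -
  define g where "g p = (fact (n - l) / fact k) * ((-1) ^ p * real (k choose p) * real ((n - p) choose (n - l)))" for p
  have eq1: "(-1) ^ p * fact (n - p) / (fact p * fact (k - p) * fact (l - p)) = g p" if p: "p \<le> min k l" for p
  proof -
    have pk: "p \<le> k" and pl: "p \<le> l" using p by auto
    have c1: "real (k choose p) = fact k / (fact p * fact (k - p))"
      using pk by (simp add: binomial_fact)
    have nl: "n - l \<le> n - p" using pl by simp
    have d: "n - p - (n - l) = l - p" using pl ln by simp
    have c2: "real ((n - p) choose (n - l)) = fact (n - p) / (fact (n - l) * fact (l - p))"
      using binomial_fact[OF nl, where 'a=real] d by simp
    show ?thesis unfolding g_def c1 c2 by (simp add: field_simps)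
  qed
  have z: "g p = 0" if "p \<in> {..k} - {..min k l}" for p
  proof -
    have "l < p" "p \<le> k" using that by auto
    then have "n - p < n - l" using kn by simp
    then show ?thesis by (simp add: g_def binomial_eq_0)
  qed
  have "(\<Sum>p\<le>min k l. (-1) ^ p * fact (n - p) / (fact p * fact (k - p) * fact (l - p)) :: real)
      = (\<Sum>p\<le>min k l. g p)" by (rule sum.cong) (auto simp: eq1)
  also have "\<dots> = (\<Sum>p\<le>k. g p)"
    by (rule sum.mono_neutral_left) (use z in auto)
  also have "\<dots> = (fact (n - l) / fact k) * (\<Sum>p\<le>k. (-1) ^ p * real (k choose p) * real ((n - p) choose (n - l)))"
    by (simp add: g_def sum_distrib_left)
  also have "\<dots> = (fact (n - l) / fact k) * (if k \<le> n - l then real ((n - k) choose (n - l - k)) else 0)"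
    by (simp add: alt_choose_real[OF kn])
  also have "\<dots> = (if k + l \<le> n then fact (n - k) * fact (n - l) / (fact k * fact l * fact (n - k - l)) else 0)"
  proof (cases "k + l \<le> n")
    case True
    have le: "n - l - k \<le> n - k" by simp
    have d: "n - k - (n - l - k) = l" using True by simp
    have "real ((n - k) choose (n - l - k)) = fact (n - k) / (fact (n - l - k) * fact l)"
      using binomial_fact[OF le, where 'a=real] d by simp
    moreover have "n - l - k = n - k - l" by simp
    ultimately show ?thesis using True by (simp add: field_simps)
  next
    case False then show ?thesis using ln by simp
  qed
  finally show ?thesis .
qed



definition coefLL :: "nat \<Rightarrow> nat \<Rightarrow> nat \<Rightarrow> real" where
  "coefLL k l p = sqrt (fact k) * sqrt (fact l) * (-1) ^ p / (fact p * fact (k - p) * fact (l - p))"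

definition kap :: "real \<Rightarrow> nat \<Rightarrow> nat \<Rightarrow> nat \<Rightarrow> nat \<Rightarrow> nat \<Rightarrow> real" where
  "kap \<eta> k l k' l' p = (1 / pi) * (1 / (sqrt (fact k') * sqrt (fact l'))) * (1 / \<eta>)
     * coefLL k l p / (sqrt (\<eta> ^ (k + l)) * sqrt \<eta> ^ (l - p) * sqrt \<eta> ^ (k - p))"

lemma term_alg:
  fixes X Y A R :: complex and e1 f0 e2 pp \<eta> s a1 a2 q cf :: real
  assumes f0: "f0 = e2 / (\<eta> * e1 * e1)" and nz: "e1 \<noteq> 0" "\<eta> \<noteq> 0" "s \<noteq> 0" "pp \<noteq> 0" "a1 \<noteq> 0" "a2 \<noteq> 0" "q \<noteq> 0"
  shows "(1 / of_real pp) * (of_real (e1 / a1) * Y ^ k' * R * (of_real (e1 / a2) * X ^ l'))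
     * (of_real f0 * (A / of_real q * (of_real cf * (X ^ m / of_real s ^ m) * (Y ^ n / of_real s ^ n))))
   = A * R * of_real ((1 / pp) * (1 / (a1 * a2)) * (1 / \<eta>) * cf / (q * s ^ m * s ^ n))
     * (of_real e2 * X ^ (l' + m) * Y ^ (k' + n))"
  using nz unfolding f0 by (simp add: field_simps power_add)

lemma term_eq:
  assumes eta: "0 < \<eta>" and p: "p \<le> min k l"
  shows "(1 / of_real pi) * (cnj (coh \<alpha> k') * \<rho> k' l' * coh \<alpha> l')
     * (of_real (1 / \<eta> * exp ((1 - 1 / \<eta>) * (cmod \<alpha>)\<^sup>2)) * (A k l / of_real (sqrt (\<eta> ^ (k + l)))
        * (of_real (coefLL k l p) * (\<alpha> / of_real (sqrt \<eta>)) ^ (l - p) * cnj (\<alpha> / of_real (sqrt \<eta>)) ^ (k - p))))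
   = A k l * \<rho> k' l' * of_real (kap \<eta> k l k' l' p) * G (1 / \<eta>) (l' + l - p) (k' + k - p) \<alpha>"
proof -
  define e1 where "e1 = exp (- (cmod \<alpha>)\<^sup>2 / 2)"
  define e2 where "e2 = exp (- (1 / \<eta>) * (cmod \<alpha>)\<^sup>2)"
  define f0 where "f0 = 1 / \<eta> * exp ((1 - 1 / \<eta>) * (cmod \<alpha>)\<^sup>2)"
  have f0: "f0 = e2 / (\<eta> * e1 * e1)"
  proof -
    have "e1 * e1 = exp (- (cmod \<alpha>)\<^sup>2)" unfolding e1_def by (simp add: exp_add[symmetric])
    moreover have "exp ((1 - 1 / \<eta>) * (cmod \<alpha>)\<^sup>2) * exp (- (cmod \<alpha>)\<^sup>2) = e2"
      unfolding e2_def by (simp add: exp_add[symmetric] algebra_simps)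
    ultimately show ?thesis unfolding f0_def using eta
      by (simp add: field_simps)
  qed
  have lp: "l' + l - p = l' + (l - p)" and kp: "k' + k - p = k' + (k - p)" using p by auto
  have c1: "cnj (coh \<alpha> k') = of_real (e1 / sqrt (fact k')) * cnj \<alpha> ^ k'"
    by (simp add: coh_def e1_def)
  have c2: "coh \<alpha> l' = of_real (e1 / sqrt (fact l')) * \<alpha> ^ l'"
    by (simp add: coh_def e1_def)
  have c3: "(\<alpha> / of_real (sqrt \<eta>)) ^ (l - p) = \<alpha> ^ (l - p) / of_real (sqrt \<eta>) ^ (l - p)"
    by (simp add: power_divide)
  have c4: "cnj (\<alpha> / of_real (sqrt \<eta>)) ^ (k - p) = cnj \<alpha> ^ (k - p) / of_real (sqrt \<eta>) ^ (k - p)"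
    by (simp add: power_divide)
  have G: "G (1 / \<eta>) (l' + l - p) (k' + k - p) \<alpha> = of_real e2 * \<alpha> ^ (l' + (l - p)) * cnj \<alpha> ^ (k' + (k - p))"
    unfolding G_def e2_def lp kp by simp
  have kap: "kap \<eta> k l k' l' p = (1 / pi) * (1 / (sqrt (fact k') * sqrt (fact l'))) * (1 / \<eta>)
     * coefLL k l p / (sqrt (\<eta> ^ (k + l)) * sqrt \<eta> ^ (l - p) * sqrt \<eta> ^ (k - p))"
    by (simp add: kap_def)
  show ?thesis
    unfolding c1 c2 c3 c4 G kap f0_def[symmetric]
    by (rule term_alg[OF f0]) (use eta in \<open>auto simp: e1_def\<close>)
qed

lemma expand:
  assumes eta: "0 < \<eta>"
  shows "husimi E \<rho> \<alpha> * fA E A \<alpha> \<eta>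
   = (\<Sum>k\<le>E. \<Sum>l\<le>E. \<Sum>k'\<le>E. \<Sum>l'\<le>E. \<Sum>p\<le>min k l.
        A k l * \<rho> k' l' * of_real (kap \<eta> k l k' l' p) * G (1 / \<eta>) (l' + l - p) (k' + k - p) \<alpha>)"
proof -
  define H where "H k' l' = (1 / of_real pi) * (cnj (coh \<alpha> k') * \<rho> k' l' * coh \<alpha> l')" for k' l'
  define F where "F k l p = of_real (1 / \<eta> * exp ((1 - 1 / \<eta>) * (cmod \<alpha>)\<^sup>2)) * (A k l / of_real (sqrt (\<eta> ^ (k + l)))
        * (of_real (coefLL k l p) * (\<alpha> / of_real (sqrt \<eta>)) ^ (l - p) * cnj (\<alpha> / of_real (sqrt \<eta>)) ^ (k - p)))" for k l p
  have h: "husimi E \<rho> \<alpha> = (\<Sum>k'\<le>E. \<Sum>l'\<le>E. H k' l')"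
    unfolding husimi_def H_def by (simp add: sum_distrib_left)
  have f: "fA E A \<alpha> \<eta> = (\<Sum>k\<le>E. \<Sum>l\<le>E. \<Sum>p\<le>min k l. F k l p)"
    unfolding fA_def F_def LL_def coefLL_def by (simp add: sum_distrib_left)
  have "husimi E \<rho> \<alpha> * fA E A \<alpha> \<eta> = (\<Sum>k'\<le>E. \<Sum>l'\<le>E. \<Sum>k\<le>E. \<Sum>l\<le>E. \<Sum>p\<le>min k l. H k' l' * F k l p)"
    unfolding h f by (simp only: sum_distrib_right) (simp only: sum_distrib_left)
  also have "\<dots> = (\<Sum>k'\<le>E. \<Sum>k\<le>E. \<Sum>l'\<le>E. \<Sum>l\<le>E. \<Sum>p\<le>min k l. H k' l' * F k l p)"
    by (rule sum.cong[OF refl], rule sum.swap)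
  also have "\<dots> = (\<Sum>k'\<le>E. \<Sum>k\<le>E. \<Sum>l\<le>E. \<Sum>l'\<le>E. \<Sum>p\<le>min k l. H k' l' * F k l p)"
    by (rule sum.cong[OF refl], rule sum.cong[OF refl], rule sum.swap)
  also have "\<dots> = (\<Sum>k\<le>E. \<Sum>k'\<le>E. \<Sum>l\<le>E. \<Sum>l'\<le>E. \<Sum>p\<le>min k l. H k' l' * F k l p)"
    by (rule sum.swap)
  also have "\<dots> = (\<Sum>k\<le>E. \<Sum>l\<le>E. \<Sum>k'\<le>E. \<Sum>l'\<le>E. \<Sum>p\<le>min k l. H k' l' * F k l p)"
    by (rule sum.cong[OF refl], rule sum.swap)
  also have "\<dots> = (\<Sum>k\<le>E. \<Sum>l\<le>E. \<Sum>k'\<le>E. \<Sum>l'\<le>E. \<Sum>p\<le>min k l.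
        A k l * \<rho> k' l' * of_real (kap \<eta> k l k' l' p) * G (1 / \<eta>) (l' + l - p) (k' + k - p) \<alpha>)"
    unfolding H_def F_def by (intro sum.cong refl term_eq[OF eta]) auto
  finally show ?thesis .
qed



definition wt :: "nat \<Rightarrow> nat \<Rightarrow> nat \<Rightarrow> real" where
  "wt k l j = sqrt (fact (l + j)) * sqrt (fact (k + j)) / (sqrt (fact k) * sqrt (fact l) * fact j)"

definition V :: "real \<Rightarrow> nat \<Rightarrow> nat \<Rightarrow> nat \<Rightarrow> nat \<Rightarrow> real" where
  "V \<eta> k l k' l' = (if k \<le> l' \<and> l' + l = k' + k then \<eta> ^ (l' - k) * wt k l (l' - k) else 0)"

lemma hb:
  assumes eta: "0 < \<eta>"
  shows "has_bochner_integral lborel (\<lambda>\<alpha>. husimi E \<rho> \<alpha> * fA E A \<alpha> \<eta>)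
    (\<Sum>k\<le>E. \<Sum>l\<le>E. \<Sum>k'\<le>E. \<Sum>l'\<le>E. \<Sum>p\<le>min k l.
        A k l * \<rho> k' l' * of_real (kap \<eta> k l k' l' p) * IG (1 / \<eta>) (l' + l - p) (k' + k - p))"
proof -
  have c: "0 < 1 / \<eta>" using eta by simp
  have leaf: "has_bochner_integral lborel (G (1 / \<eta>) a b) (IG (1 / \<eta>) a b)" for a b
    using integrable_G[OF c] by (simp add: has_bochner_integral_iff IG_def)
  show ?thesis
    unfolding expand[OF eta]
    by (intro has_bochner_integral_sum has_bochner_integral_mult_right leaf)
qed

lemma kap_simp:
  assumes eta: "0 < \<eta>" and p: "p \<le> k" "p \<le> l" "p \<le> n"
  shows "kap \<eta> k l k' l' p * (pi * fact (n - p) * \<eta> ^ (n - p + 1))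
     = coefLL k l p * fact (n - p) * \<eta> ^ n / (\<eta> ^ (k + l) * sqrt (fact k') * sqrt (fact l'))"
proof -
  define s where "s = sqrt \<eta>"
  have s: "0 < s" using eta by (simp add: s_def)
  have e: "\<eta> = s ^ 2" using eta by (simp add: s_def)
  have q: "sqrt (\<eta> ^ (k + l)) = s ^ (k + l)" by (simp add: s_def real_sqrt_power)
  have pw: "s ^ (2 * (n - p + 1)) * s ^ (2 * (k + l)) = s ^ 2 * s ^ (k + l) * s ^ (l - p) * s ^ (k - p) * s ^ (2 * n)"
  proof -
    have "2 * (n - p + 1) + 2 * (k + l) = 2 + (k + l) + (l - p) + (k - p) + 2 * n" using p by simp
    then show ?thesis by (simp only: power_add[symmetric])
  qed
  have "kap \<eta> k l k' l' p * (pi * fact (n - p) * \<eta> ^ (n - p + 1))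
      = coefLL k l p * fact (n - p) * (s ^ (2 * (n - p + 1)) / (s ^ 2 * s ^ (k + l) * s ^ (l - p) * s ^ (k - p)))
        / (sqrt (fact k') * sqrt (fact l'))"
  proof -
    have k1: "kap \<eta> k l k' l' p = (1 / pi) * (1 / (sqrt (fact k') * sqrt (fact l'))) * (1 / s ^ 2)
     * coefLL k l p / (s ^ (k + l) * s ^ (l - p) * s ^ (k - p))"
      unfolding kap_def q s_def[symmetric] e[symmetric] ..
    have k2: "\<eta> ^ (n - p + 1) = s ^ (2 * (n - p + 1))" unfolding e by (simp only: power_mult)
    show ?thesis unfolding k1 k2 using s by (simp add: field_simps)
  qed
  also have "s ^ (2 * (n - p + 1)) / (s ^ 2 * s ^ (k + l) * s ^ (l - p) * s ^ (k - p)) = s ^ (2 * n) / s ^ (2 * (k + l))"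
    using s pw by (simp add: field_simps)
  also have "s ^ (2 * n) / s ^ (2 * (k + l)) = \<eta> ^ n / \<eta> ^ (k + l)"
    unfolding e by (simp only: power_mult)
  finally show ?thesis by (simp add: field_simps)
qed

lemma IG_eta:
  assumes eta: "0 < \<eta>"
  shows "IG (1 / \<eta>) a b = (if a = b then of_real (pi * fact a * \<eta> ^ (a + 1)) else 0)"
  using IG_closed[of "1/\<eta>" a b] eta by (simp add: power_divide)

lemma sum_p:
  assumes eta: "0 < \<eta>"
  shows "(\<Sum>p\<le>min k l. of_real (kap \<eta> k l k' l' p) * IG (1 / \<eta>) (l' + l - p) (k' + k - p)) = complex_of_real (V \<eta> k l k' l')"
proof (cases "l' + l = k' + k")
  case False
  have "IG (1 / \<eta>) (l' + l - p) (k' + k - p) = 0" if "p \<in> {..min k l}" for p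
    using that False IG_eta[OF eta] by auto
  then show ?thesis using False by (simp add: V_def)
next
  case True
  define n where "n = l' + l"
  have kn: "k \<le> n" and ln: "l \<le> n" and nk: "n - k = k'" and nl: "n - l = l'" using True by (auto simp: n_def)
  have "(\<Sum>p\<le>min k l. of_real (kap \<eta> k l k' l' p) * IG (1 / \<eta>) (l' + l - p) (k' + k - p))
     = (\<Sum>p\<le>min k l. complex_of_real (coefLL k l p * fact (n - p) * \<eta> ^ n / (\<eta> ^ (k + l) * sqrt (fact k') * sqrt (fact l'))))"
  proof (rule sum.cong[OF refl])
    fix p assume "p \<in> {..min k l}"
    then have p: "p \<le> k" "p \<le> l" "p \<le> n" using kn by auto
    have "IG (1 / \<eta>) (l' + l - p) (k' + k - p) = of_real (pi * fact (n - p) * \<eta> ^ (n - p + 1))"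
      using IG_eta[OF eta] True by (simp add: n_def)
    then show "of_real (kap \<eta> k l k' l' p) * IG (1 / \<eta>) (l' + l - p) (k' + k - p)
        = complex_of_real (coefLL k l p * fact (n - p) * \<eta> ^ n / (\<eta> ^ (k + l) * sqrt (fact k') * sqrt (fact l')))"
      using kap_simp[OF eta p, of k' l'] by (simp flip: of_real_mult)
  qed
  also have "\<dots> = complex_of_real ((\<eta> ^ n / (\<eta> ^ (k + l) * sqrt (fact k') * sqrt (fact l'))) * (sqrt (fact k) * sqrt (fact l))
      * (\<Sum>p\<le>min k l. (-1) ^ p * fact (n - p) / (fact p * fact (k - p) * fact (l - p))))"
    by (simp add: sum_distrib_left coefLL_def field_simps)
  also have "\<dots> = complex_of_real (V \<eta> k l k' l')"
  proof (cases "k \<le> l'")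
    case True2: True
    define j where "j = l' - k"
    have kl: "k + l \<le> n" and nkl: "n - k - l = j" and lj: "l + j = k'" and kj: "k + j = l'"
      using True True2 by (auto simp: n_def j_def)
    have en: "\<eta> ^ n / \<eta> ^ (k + l) = \<eta> ^ j"
    proof -
      have "n = (k + l) + j" using kl nkl by simp
      then show ?thesis using eta by (simp add: power_add)
    qed
    have sq2: "sqrt (fact m) * (sqrt (fact m) * x) = (fact m * x :: real)" for m x by (simp add: mult.assoc[symmetric])
    have kl2: "k' - l = j" using lj by simp
    have "(\<eta> ^ n / (\<eta> ^ (k + l) * sqrt (fact k') * sqrt (fact l'))) * (sqrt (fact k) * sqrt (fact l))
      * (fact (n - k) * fact (n - l) / (fact k * fact l * fact (n - k - l)))
      = \<eta> ^ j * wt k l j"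
      unfolding wt_def nk nl nkl lj kj
      using en eta by (simp add: field_simps kl2 sq2)
    then show ?thesis using True True2 comb_real[OF kn ln] kl by (simp add: V_def j_def)
  next
    case False
    then have "\<not> k + l \<le> n" using True by (simp add: n_def)
    then show ?thesis using False comb_real[OF kn ln] by (simp add: V_def)
  qed
  finally show ?thesis .
qed



lemma shift_sum:
  fixes g :: "nat \<Rightarrow> 'a::comm_monoid_add"
  assumes z: "\<And>j. E < k + j \<Longrightarrow> g j = 0"
  shows "(\<Sum>l'\<le>E. if k \<le> l' then g (l' - k) else 0) = (\<Sum>j\<le>E. g j)"
proof -
  have "(\<Sum>l'\<le>E. if k \<le> l' then g (l' - k) else 0) = (\<Sum>l'\<in>{k..E}. g (l' - k))"
    by (rule sum.mono_neutral_cong_right) auto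
  also have "{k..E} = (\<lambda>j. k + j) ` {j. j \<le> E \<and> k + j \<le> E}"
  proof
    show "{k..E} \<subseteq> (\<lambda>j. k + j) ` {j. j \<le> E \<and> k + j \<le> E}"
    proof
      fix x assume "x \<in> {k..E}"
      then have "x = k + (x - k)" "x - k \<le> E" "k + (x - k) \<le> E" by auto
      then show "x \<in> (\<lambda>j. k + j) ` {j. j \<le> E \<and> k + j \<le> E}" by blast
    qed
  qed auto
  also have "(\<Sum>l'\<in>(\<lambda>j. k + j) ` {j. j \<le> E \<and> k + j \<le> E}. g (l' - k)) = (\<Sum>j\<in>{j. j \<le> E \<and> k + j \<le> E}. g j)"
    by (subst sum.reindex) (auto simp: inj_on_def)
  also have "\<dots> = (\<Sum>j\<le>E. g j)"
    by (rule sum.mono_neutral_left) (use z in \<open>force simp: not_le\<close>)+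
  finally show ?thesis .
qed

lemma sum_V:
  assumes vanish: "\<And>a b. E < a \<or> E < b \<Longrightarrow> \<rho> a b = 0"
  shows "(\<Sum>k'\<le>E. \<Sum>l'\<le>E. \<rho> k' l' * complex_of_real (V \<eta> k l k' l'))
       = (\<Sum>j\<le>E. \<rho> (l + j) (k + j) * complex_of_real (\<eta> ^ j * wt k l j))"
proof -
  define g where "g j = \<rho> (l + j) (k + j) * complex_of_real (\<eta> ^ j * wt k l j)" for j
  have inner: "(\<Sum>k'\<le>E. \<rho> k' l' * complex_of_real (V \<eta> k l k' l')) = (if k \<le> l' then g (l' - k) else 0)" for l'
  proof (cases "k \<le> l'")
    case True
    define t where "t = l' + l - k"
    have "(\<Sum>k'\<le>E. \<rho> k' l' * complex_of_real (V \<eta> k l k' l'))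
       = (\<Sum>k'\<le>E. if k' = t then \<rho> t l' * complex_of_real (\<eta> ^ (l' - k) * wt k l (l' - k)) else 0)"
      by (rule sum.cong[OF refl]) (use True in \<open>auto simp: V_def t_def\<close>)
    also have "\<dots> = \<rho> t l' * complex_of_real (\<eta> ^ (l' - k) * wt k l (l' - k))"
      using vanish[of t l'] by (auto simp: sum.delta)
    also have "\<dots> = g (l' - k)" using True by (simp add: g_def t_def add.commute)
    finally show ?thesis using True by simp
  next
    case False then show ?thesis by (simp add: V_def)
  qed
  have "(\<Sum>k'\<le>E. \<Sum>l'\<le>E. \<rho> k' l' * complex_of_real (V \<eta> k l k' l'))
      = (\<Sum>l'\<le>E. \<Sum>k'\<le>E. \<rho> k' l' * complex_of_real (V \<eta> k l k' l'))"
    by (rule sum.swap)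
  also have "\<dots> = (\<Sum>l'\<le>E. if k \<le> l' then g (l' - k) else 0)" by (simp only: inner)
  also have "\<dots> = (\<Sum>j\<le>E. g j)"
    by (rule shift_sum) (use vanish in \<open>auto simp: g_def\<close>)
  finally show ?thesis by (simp add: g_def)
qed



lemma sum_delta_mult:
  fixes f :: "nat \<Rightarrow> 'a::comm_ring_1"
  shows "(\<Sum>l\<le>E. f l * (if l = a then s else 0)) = (if a \<le> E then f a * s else 0)"
    and "(\<Sum>l\<le>E. (if l = a then s else 0) * f l) = (if a \<le> E then s * f a else 0)"
proof -
  have "(\<Sum>l\<le>E. f l * (if l = a then s else 0)) = (\<Sum>l\<le>E. if l = a then f a * s else 0)"
    by (rule sum.cong) auto
  then show "(\<Sum>l\<le>E. f l * (if l = a then s else 0)) = (if a \<le> E then f a * s else 0)"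
    by (simp add: sum.delta')
  have "(\<Sum>l\<le>E. (if l = a then s else 0) * f l) = (\<Sum>l\<le>E. if l = a then s * f a else 0)"
    by (rule sum.cong) auto
  then show "(\<Sum>l\<le>E. (if l = a then s else 0) * f l) = (if a \<le> E then s * f a else 0)"
    by (simp add: sum.delta')
qed

lemma quad_form_two:
  fixes \<rho> :: "nat \<Rightarrow> nat \<Rightarrow> complex"
  assumes ab: "a \<le> E" "b \<le> E" "a \<noteq> b"
  shows "(\<Sum>k\<le>E. \<Sum>l\<le>E. cnj ((\<lambda>i. (if i = a then s else 0) + (if i = b then t else 0)) k) * \<rho> k l
            * (\<lambda>i. (if i = a then s else 0) + (if i = b then t else 0)) l)
     = cnj s * \<rho> a a * s + cnj s * \<rho> a b * t + cnj t * \<rho> b a * s + cnj t * \<rho> b b * t"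
proof -
  have inner: "(\<Sum>l\<le>E. X * \<rho> k l * ((if l = a then s else 0) + (if l = b then t else 0))) = X * \<rho> k a * s + X * \<rho> k b * t" for X k
    using ab by (simp add: distrib_left sum.distrib sum_delta_mult)
  have "(\<Sum>k\<le>E. \<Sum>l\<le>E. cnj ((if k = a then s else 0) + (if k = b then t else 0)) * \<rho> k l
            * ((if l = a then s else 0) + (if l = b then t else 0)))
      = (\<Sum>k\<le>E. cnj ((if k = a then s else 0) + (if k = b then t else 0)) * \<rho> k a * s
            + cnj ((if k = a then s else 0) + (if k = b then t else 0)) * \<rho> k b * t)"
    by (simp only: inner)
  also have "\<dots> = cnj s * \<rho> a a * s + cnj s * \<rho> a b * t + cnj t * \<rho> b a * s + cnj t * \<rho> b b * t"
  proof -
    have e: "cnj ((if k = a then s else 0) + (if k = b then t else 0)) = (if k = a then cnj s else 0) + (if k = b then cnj t else 0)" for k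
      by simp
    show ?thesis unfolding e using ab by (simp add: distrib_right sum.distrib sum_delta_mult mult.assoc)
  qed
  finally show ?thesis by simp
qed

lemma disc:
  fixes A B C :: real
  assumes q: "\<And>x. 0 \<le> x\<^sup>2 * A - 2 * x * B + C" and A: "0 \<le> A" and B: "0 \<le> B"
  shows "B\<^sup>2 \<le> A * C"
proof (cases "A = 0")
  case True
  show ?thesis
  proof (cases "B = 0")
    case True then show ?thesis using A q[of 0] by simp
  next
    case False
    then have "0 < B" using B by simp
    then have "0 \<le> - 2 * ((C + 1) / (2 * B)) * B + C" using q[of "(C + 1) / (2 * B)"] \<open>A = 0\<close> by simp
    also have "- 2 * ((C + 1) / (2 * B)) * B + C = -1" using \<open>0 < B\<close> by (simp add: field_simps)
    finally show ?thesis by simp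
  qed
next
  case False
  then have A0: "0 < A" using A by simp
  have "0 \<le> (B / A)\<^sup>2 * A - 2 * (B / A) * B + C" by (rule q)
  also have "(B / A)\<^sup>2 * A - 2 * (B / A) * B + C = C - B\<^sup>2 / A" using A0 by (simp add: field_simps power2_eq_square)
  finally have "B\<^sup>2 / A \<le> C" by simp
  then show ?thesis using A0 by (simp add: field_simps)
qed

lemma db_vanish: "density_bounded E \<rho> \<Longrightarrow> E < a \<or> E < b \<Longrightarrow> \<rho> a b = 0"
  unfolding density_bounded_def by blast

lemma db_herm: "density_bounded E \<rho> \<Longrightarrow> \<rho> b a = cnj (\<rho> a b)"
  unfolding density_bounded_def by blast

lemma db_psd: "density_bounded E \<rho> \<Longrightarrow> 0 \<le> Re (\<Sum>k\<le>E. \<Sum>l\<le>E. cnj (x k) * \<rho> k l * x l)"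
  unfolding density_bounded_def by blast

lemma db_trace: "density_bounded E \<rho> \<Longrightarrow> (\<Sum>k\<le>E. \<rho> k k) = 1"
  unfolding density_bounded_def by blast

lemma db_diag_real:
  assumes "density_bounded E \<rho>"
  shows "\<rho> a a = of_real (Re (\<rho> a a))"
proof -
  have "\<rho> a a = cnj (\<rho> a a)" using db_herm[OF assms, of a a] .
  then have "Im (\<rho> a a) = 0" by (metis cnj.simps(2) complex_cnj_cancel_iff neg_equal_zero)
  then show ?thesis by (simp add: complex_eq_iff)
qed

lemma db_diag_nonneg:
  assumes db: "density_bounded E \<rho>"
  shows "0 \<le> Re (\<rho> a a)"
proof (cases "a \<le> E")
  case True
  have "(\<Sum>k\<le>E. \<Sum>l\<le>E. cnj ((\<lambda>i. if i = a then 1 else 0) k) * \<rho> k l * (\<lambda>i. if i = a then 1 else 0) l) = \<rho> a a"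
  proof -
    have e: "cnj (if k = a then 1 else 0) = (if k = a then (1::complex) else 0)" for k by simp
    show ?thesis unfolding e using True by (simp add: sum_delta_mult)
  qed
  then show ?thesis using db_psd[OF db, of "\<lambda>i. if i = a then 1 else 0"] by simp
next
  case False then show ?thesis using db_vanish[OF db, of a a] by simp
qed

lemma db_offdiag:
  assumes db: "density_bounded E \<rho>"
  shows "(cmod (\<rho> a b))\<^sup>2 \<le> Re (\<rho> a a) * Re (\<rho> b b)"
proof (cases "a \<le> E \<and> b \<le> E")
  case False
  then have "\<rho> a b = 0" using db_vanish[OF db] by auto
  then show ?thesis using db_diag_nonneg[OF db, of a] db_diag_nonneg[OF db, of b] by simp
next
  case ab: True
  show ?thesis
  proof (cases "a = b")
    case True
    then show ?thesis using db_diag_real[OF db, of a]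
    proof -
      have "cmod (\<rho> a a) = Re (\<rho> a a)"
        using db_diag_real[OF db, of a] db_diag_nonneg[OF db, of a] by (metis abs_of_nonneg norm_of_real)
      then show ?thesis using True by (simp add: power2_eq_square)
    qed
  next
    case neq: False
    show ?thesis
    proof (cases "\<rho> a b = 0")
      case True then show ?thesis using db_diag_nonneg[OF db, of a] db_diag_nonneg[OF db, of b] by simp
    next
      case nz: False
      define r where "r = \<rho> a b"
      define u where "u = r / of_real (cmod r)"
      have ru: "r = of_real (cmod r) * u" using nz by (simp add: u_def r_def)
      have uu: "u * cnj u = 1" using nz
      proof -
        have "u * cnj u = (r * cnj r) / (of_real (cmod r) * of_real (cmod r))"
          by (simp add: u_def)
        also have "r * cnj r = of_real ((cmod r)\<^sup>2)" by (rule complex_norm_square[symmetric])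
        also have "of_real ((cmod r)\<^sup>2) / (of_real (cmod r) * of_real (cmod r)) = (1::complex)"
          using nz by (simp add: r_def power2_eq_square)
        finally show ?thesis .
      qed
      have rba: "\<rho> b a = cnj r" using db_herm[OF db, of a b] by (simp add: r_def)
      define pa where "pa = Re (\<rho> a a)"
      define pb where "pb = Re (\<rho> b b)"
      have raa: "\<rho> a a = of_real pa" using db_diag_real[OF db, of a] by (simp add: pa_def)
      have rbb: "\<rho> b b = of_real pb" using db_diag_real[OF db, of b] by (simp add: pb_def)
      have q: "0 \<le> x\<^sup>2 * pa - 2 * x * cmod r + pb" for x :: real
      proof -
        define s where "s = complex_of_real x"
        define t where "t = - cnj u"
        have "0 \<le> Re (cnj s * \<rho> a a * s + cnj s * \<rho> a b * t + cnj t * \<rho> b a * s + cnj t * \<rho> b b * t)"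
          using db_psd[OF db, of "\<lambda>i. (if i = a then s else 0) + (if i = b then t else 0)"]
          unfolding quad_form_two[OF ab[THEN conjunct1] ab[THEN conjunct2] neq] .
        also have "cnj s * \<rho> a a * s + cnj s * \<rho> a b * t + cnj t * \<rho> b a * s + cnj t * \<rho> b b * t
          = of_real (x\<^sup>2 * pa) - of_real (x * cmod r) * (u * cnj u) - of_real (x * cmod r) * (u * cnj u) + of_real pb * (u * cnj u)"
        proof -
          have e1: "cnj s * of_real pa * s = of_real (x\<^sup>2 * pa)" by (simp add: s_def power2_eq_square)
          have e2: "cnj s * r * t = - of_real (x * cmod r) * (u * cnj u)"
            by (subst ru) (simp add: s_def t_def)
          have e3: "cnj t * cnj r * s = - of_real (x * cmod r) * (u * cnj u)"
            by (subst ru) (simp add: s_def t_def mult.commute mult.left_commute)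
          have e4: "cnj t * of_real pb * t = of_real pb * (u * cnj u)"
            by (simp add: t_def mult.commute mult.left_commute)
          show ?thesis unfolding raa rbb rba r_def[symmetric] e1 e2 e3 e4 by simp
        qed
        also have "\<dots> = of_real (x\<^sup>2 * pa - 2 * x * cmod r + pb)" unfolding uu by simp
        finally show ?thesis by simp
      qed
      have "(cmod r)\<^sup>2 \<le> pa * pb"
        by (rule disc[OF q]) (use db_diag_nonneg[OF db] in \<open>auto simp: pa_def\<close>)
      then show ?thesis by (simp add: r_def pa_def pb_def)
    qed
  qed
qed



lemma key_binom:
  assumes eta: "0 < \<eta>" and eE: "\<eta> * real E < 2"
  shows "m + i + 1 \<le> E \<Longrightarrow> \<eta> ^ (i + 1) * real ((m + i + 1) choose (i + 1)) \<le> \<eta> * (m + 1)"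
proof (induction i)
  case 0 then show ?case by simp
next
  case (Suc i)
  have IH: "\<eta> ^ (i + 1) * real ((m + i + 1) choose (i + 1)) \<le> \<eta> * (m + 1)" using Suc by simp
  have rec: "real (i + 2) * real ((m + i + 2) choose (i + 2)) = real (m + i + 2) * real ((m + i + 1) choose (i + 1))"
  proof -
    have n: "Suc (Suc i) * (Suc (Suc (m + i)) choose Suc (Suc i)) = Suc (Suc (m + i)) * (Suc (m + i) choose Suc i)"
      using Suc_times_binomial[of "Suc i" "Suc (m + i)"] .
    have "real (Suc (Suc i) * (Suc (Suc (m + i)) choose Suc (Suc i))) = real (Suc (Suc (m + i)) * (Suc (m + i) choose Suc i))"
      using arg_cong[OF n, of real] .
    moreover have "i + 2 = Suc (Suc i)" "m + i + 2 = Suc (Suc (m + i))" "m + i + 1 = Suc (m + i)" "i + 1 = Suc i" by simp_all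
    ultimately show ?thesis by (simp only: of_nat_mult)
  qed
  have le: "\<eta> * real (m + i + 2) \<le> real (i + 2)"
  proof -
    have "\<eta> * real (m + i + 2) \<le> \<eta> * real E" using Suc.prems eta by (intro mult_left_mono) auto
    also have "\<dots> < 2" by (rule eE)
    also have "2 \<le> real (i + 2)" by simp
    finally show ?thesis by simp
  qed
  have "\<eta> ^ (Suc i + 1) * real ((m + Suc i + 1) choose (Suc i + 1))
     = \<eta> ^ (i + 1) * real ((m + i + 1) choose (i + 1)) * (\<eta> * real (m + i + 2) / real (i + 2))"
    using rec by (simp add: field_simps del: binomial_Suc_Suc)
  also have "\<dots> \<le> \<eta> ^ (i + 1) * real ((m + i + 1) choose (i + 1)) * 1"
    using le eta by (intro mult_left_mono) auto
  also have "\<dots> \<le> \<eta> * (m + 1)" using IH by simp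
  finally show ?case .
qed

lemma key_binom':
  assumes eta: "0 < \<eta>" and eE: "\<eta> * real E < 2" and j: "1 \<le> j" "m + j \<le> E"
  shows "\<eta> ^ j * real ((m + j) choose j) \<le> \<eta> * (m + 1)"
proof -
  obtain i where i: "j = i + 1" using j by (metis add.commute le_Suc_ex plus_1_eq_Suc)
  show ?thesis using key_binom[OF eta eE, of m i] j unfolding i by (simp add: ac_simps)
qed

lemma wt_binom: "wt k l j = sqrt (real ((l + j) choose j)) * sqrt (real ((k + j) choose j))"
proof -
  have b1: "real ((l + j) choose j) = fact (l + j) / (fact j * fact l)"
    using binomial_fact[of j "l + j", where 'a=real] by simp
  have b2: "real ((k + j) choose j) = fact (k + j) / (fact j * fact k)"
    using binomial_fact[of j "k + j", where 'a=real] by simp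
  have sj: "sqrt (fact j) * sqrt (fact j) = (fact j :: real)" by simp
  show ?thesis unfolding wt_def b1 b2 real_sqrt_divide real_sqrt_mult
    by (simp add: field_simps sj)
qed

lemma pd_sum_shift:
  fixes pd :: "nat \<Rightarrow> real"
  assumes pd0: "\<And>a. 0 \<le> pd a" and pdE: "\<And>a. E < a \<Longrightarrow> pd a = 0" and tot: "(\<Sum>a\<le>E. pd a) = 1"
  shows "(\<Sum>j\<in>{1..E}. pd (l + j)) \<le> 1"
proof -
  let ?I = "(\<lambda>j. l + j) ` {1..E}"
  have "(\<Sum>j\<in>{1..E}. pd (l + j)) = (\<Sum>a\<in>?I. pd a)"
    by (subst sum.reindex) (auto simp: inj_on_def)
  also have "\<dots> = (\<Sum>a\<in>?I \<inter> {..E}. pd a)"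
    by (rule sum.mono_neutral_right) (auto simp: pdE not_le)
  also have "\<dots> \<le> (\<Sum>a\<in>{..E}. pd a)"
    by (rule sum_mono2) (auto simp: pd0)
  finally show ?thesis using tot by simp
qed

lemma R_bound:
  assumes db: "density_bounded E \<rho>" and eta: "0 < \<eta>" and eE: "\<eta> * real E < 2"
  shows "cmod (\<Sum>j\<in>{1..E}. \<rho> (l + j) (k + j) * complex_of_real (\<eta> ^ j * wt k l j)) \<le> \<eta> * sqrt (real ((k + 1) * (l + 1)))"
proof -
  define pd where "pd a = Re (\<rho> a a)" for a
  have pd0: "0 \<le> pd a" for a unfolding pd_def by (rule db_diag_nonneg[OF db])
  have pdE: "pd a = 0" if "E < a" for a unfolding pd_def using db_vanish[OF db, of a a] that by simp
  have tot: "(\<Sum>a\<le>E. pd a) = 1"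
  proof -
    have "(\<Sum>a\<le>E. pd a) = Re (\<Sum>a\<le>E. \<rho> a a)" by (simp add: pd_def)
    then show ?thesis using db_trace[OF db] by simp
  qed
  have rb: "cmod (\<rho> a b) \<le> sqrt (pd a * pd b)" for a b
    using db_offdiag[OF db, of a b] unfolding pd_def by (rule real_le_rsqrt)
  define X where "X j = \<eta> ^ j * real ((l + j) choose j) * pd (l + j)" for j
  define Y where "Y j = \<eta> ^ j * real ((k + j) choose j) * pd (k + j)" for j
  have X0: "0 \<le> X j" for j unfolding X_def using eta pd0 by simp
  have Y0: "0 \<le> Y j" for j unfolding Y_def using eta pd0 by simp
  have sXY: "sqrt (X j) * sqrt (Y j) = \<eta> ^ j * wt k l j * sqrt (pd (l + j) * pd (k + j))" for j
  proof -
    have "sqrt (\<eta> ^ j) * sqrt (\<eta> ^ j) = \<eta> ^ j" using eta by simp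
    then show ?thesis unfolding X_def Y_def wt_binom real_sqrt_mult
      by (simp add: ac_simps)
  qed
  have wt0: "0 \<le> wt k l j" for j unfolding wt_def by simp
  have step1: "cmod (\<Sum>j\<in>{1..E}. \<rho> (l + j) (k + j) * complex_of_real (\<eta> ^ j * wt k l j)) \<le> (\<Sum>j\<in>{1..E}. sqrt (X j) * sqrt (Y j))"
  proof -
    have "cmod (\<Sum>j\<in>{1..E}. \<rho> (l + j) (k + j) * complex_of_real (\<eta> ^ j * wt k l j))
        \<le> (\<Sum>j\<in>{1..E}. cmod (\<rho> (l + j) (k + j) * complex_of_real (\<eta> ^ j * wt k l j)))"
      by (rule norm_sum)
    also have "\<dots> \<le> (\<Sum>j\<in>{1..E}. sqrt (X j) * sqrt (Y j))"
    proof (rule sum_mono)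
      fix j
      have "cmod (\<rho> (l + j) (k + j) * complex_of_real (\<eta> ^ j * wt k l j)) = cmod (\<rho> (l + j) (k + j)) * (\<eta> ^ j * wt k l j)"
        using eta wt0[of j] by (simp add: norm_mult norm_power)
      also have "\<dots> \<le> sqrt (pd (l + j) * pd (k + j)) * (\<eta> ^ j * wt k l j)"
        using rb[of "l + j" "k + j"] eta wt0[of j] by (intro mult_right_mono) auto
      also have "\<dots> = sqrt (X j) * sqrt (Y j)" unfolding sXY by simp
      finally show "cmod (\<rho> (l + j) (k + j) * complex_of_real (\<eta> ^ j * wt k l j)) \<le> sqrt (X j) * sqrt (Y j)" .
    qed
    finally show ?thesis .
  qed
  have sumbound: "(\<Sum>j\<in>{1..E}. \<eta> ^ j * real ((m + j) choose j) * pd (m + j)) \<le> \<eta> * (m + 1)" for m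
  proof -
    have "(\<Sum>j\<in>{1..E}. \<eta> ^ j * real ((m + j) choose j) * pd (m + j)) \<le> (\<Sum>j\<in>{1..E}. \<eta> * (m + 1) * pd (m + j))"
    proof (rule sum_mono)
      fix j assume j: "j \<in> {1..E}"
      show "\<eta> ^ j * real ((m + j) choose j) * pd (m + j) \<le> \<eta> * (m + 1) * pd (m + j)"
      proof (cases "m + j \<le> E")
        case True
        then show ?thesis using key_binom'[OF eta eE, of j m] j pd0[of "m + j"] by (intro mult_right_mono) auto
      next
        case False then show ?thesis using pdE[of "m + j"] by simp
      qed
    qed
    also have "\<dots> = \<eta> * (m + 1) * (\<Sum>j\<in>{1..E}. pd (m + j))" by (simp add: sum_distrib_left)
    also have "\<dots> \<le> \<eta> * (m + 1) * 1"
      using pd_sum_shift[OF pd0 pdE tot, of m] eta by (intro mult_left_mono) auto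
    finally show ?thesis by simp
  qed
  have SX: "(\<Sum>j\<in>{1..E}. X j) \<le> \<eta> * (l + 1)" unfolding X_def by (rule sumbound)
  have SY: "(\<Sum>j\<in>{1..E}. Y j) \<le> \<eta> * (k + 1)" unfolding Y_def by (rule sumbound)
  have "(\<Sum>j\<in>{1..E}. sqrt (X j) * sqrt (Y j))\<^sup>2 \<le> (\<Sum>j\<in>{1..E}. (sqrt (X j))\<^sup>2) * (\<Sum>j\<in>{1..E}. (sqrt (Y j))\<^sup>2)"
    by (rule Cauchy_Schwarz_ineq_sum)
  also have "\<dots> = (\<Sum>j\<in>{1..E}. X j) * (\<Sum>j\<in>{1..E}. Y j)" using X0 Y0 by simp
  also have "\<dots> \<le> (\<eta> * (l + 1)) * (\<eta> * (k + 1))"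
    using SX SY X0 Y0 eta by (intro mult_mono sum_nonneg) auto
  also have "\<dots> = \<eta>\<^sup>2 * real ((k + 1) * (l + 1))" by (simp add: power2_eq_square algebra_simps)
  finally have "(\<Sum>j\<in>{1..E}. sqrt (X j) * sqrt (Y j)) \<le> sqrt (\<eta>\<^sup>2 * real ((k + 1) * (l + 1)))"
    by (rule real_le_rsqrt)
  also have "\<dots> = \<eta> * sqrt (real ((k + 1) * (l + 1)))" using eta by (simp add: real_sqrt_mult)
  finally show ?thesis using step1 by linarith
qed



lemma wt0_one: "wt k l 0 = 1"
  by (simp add: wt_def)

theorem theorem1:
  fixes E :: nat and \<eta> :: real
    and A \<rho> :: "nat \<Rightarrow> nat \<Rightarrow> complex"
  assumes "0 < \<eta>" and "\<eta> < 1" and "\<eta> * real E < 2"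
    and "density_bounded E \<rho>"
  shows "integrable lborel (\<lambda>\<alpha>. husimi E \<rho> \<alpha> * fA E A \<alpha> \<eta>)
    \<and> cmod (tr_prod E A \<rho> - (LINT \<alpha>|lborel. husimi E \<rho> \<alpha> * fA E A \<alpha> \<eta>)) \<le> \<eta> * KA E A"
proof -
  note eta = assms(1) and eE = assms(3) and db = assms(4)
  define T where "T k l = (\<Sum>j\<le>E. \<rho> (l + j) (k + j) * complex_of_real (\<eta> ^ j * wt k l j))" for k l
  define R where "R k l = (\<Sum>j\<in>{1..E}. \<rho> (l + j) (k + j) * complex_of_real (\<eta> ^ j * wt k l j))" for k l
  have TR: "T k l = \<rho> l k + R k l" for k l
  proof -
    have "T k l = (\<Sum>j\<in>{0..E}. \<rho> (l + j) (k + j) * complex_of_real (\<eta> ^ j * wt k l j))"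
      by (simp add: T_def atMost_atLeast0)
    also have "\<dots> = \<rho> l k + R k l"
      by (subst sum.atLeast_Suc_atMost) (simp_all add: R_def wt0_one)
    finally show ?thesis .
  qed
  note H = hb[OF eta, of E \<rho> A]
  have int: "integrable lborel (\<lambda>\<alpha>. husimi E \<rho> \<alpha> * fA E A \<alpha> \<eta>)"
    using H by (simp add: has_bochner_integral_iff)
  have "(LINT \<alpha>|lborel. husimi E \<rho> \<alpha> * fA E A \<alpha> \<eta>)
     = (\<Sum>k\<le>E. \<Sum>l\<le>E. \<Sum>k'\<le>E. \<Sum>l'\<le>E. \<Sum>p\<le>min k l.
        A k l * \<rho> k' l' * of_real (kap \<eta> k l k' l' p) * IG (1 / \<eta>) (l' + l - p) (k' + k - p))"
    using H by (simp add: has_bochner_integral_iff)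
  also have "\<dots> = (\<Sum>k\<le>E. \<Sum>l\<le>E. A k l * (\<Sum>k'\<le>E. \<Sum>l'\<le>E. \<rho> k' l' *
        (\<Sum>p\<le>min k l. of_real (kap \<eta> k l k' l' p) * IG (1 / \<eta>) (l' + l - p) (k' + k - p))))"
    by (simp add: sum_distrib_left mult.assoc)
  also have "\<dots> = (\<Sum>k\<le>E. \<Sum>l\<le>E. A k l * T k l)"
  proof -
    have v: "(\<Sum>k'\<le>E. \<Sum>l'\<le>E. \<rho> k' l' * complex_of_real (V \<eta> k l k' l')) = T k l" for k l
      unfolding T_def by (rule sum_V) (rule db_vanish[OF db])
    show ?thesis unfolding sum_p[OF eta] v ..
  qed
  finally have I: "(LINT \<alpha>|lborel. husimi E \<rho> \<alpha> * fA E A \<alpha> \<eta>) = (\<Sum>k\<le>E. \<Sum>l\<le>E. A k l * T k l)" .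
  have "tr_prod E A \<rho> - (LINT \<alpha>|lborel. husimi E \<rho> \<alpha> * fA E A \<alpha> \<eta>) = - (\<Sum>k\<le>E. \<Sum>l\<le>E. A k l * R k l)"
    unfolding I tr_prod_def TR by (simp add: sum_subtractf[symmetric] sum_negf[symmetric] algebra_simps)
  then have "cmod (tr_prod E A \<rho> - (LINT \<alpha>|lborel. husimi E \<rho> \<alpha> * fA E A \<alpha> \<eta>)) = cmod (\<Sum>k\<le>E. \<Sum>l\<le>E. A k l * R k l)"
    by simp
  also have "\<dots> \<le> (\<Sum>k\<le>E. cmod (\<Sum>l\<le>E. A k l * R k l))" by (rule norm_sum)
  also have "\<dots> \<le> (\<Sum>k\<le>E. \<Sum>l\<le>E. cmod (A k l * R k l))" by (intro sum_mono norm_sum)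
  also have "\<dots> \<le> (\<Sum>k\<le>E. \<Sum>l\<le>E. cmod (A k l) * (\<eta> * sqrt (real ((k + 1) * (l + 1)))))"
    unfolding norm_mult R_def by (intro sum_mono mult_left_mono R_bound[OF db eta eE]) auto
  also have "\<dots> = \<eta> * KA E A"
    by (simp add: KA_def sum_distrib_left algebra_simps)
  finally show ?thesis using int by simp
qed

end
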